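(* Let $g$ be a constant indefinite pseudo-Riemann metric on $\mathbb R^4$ (i.e. of signature $(-+++)$, $(+---)$ or $(--++)$), let $C_1\in\mathbb R\setminus\{0\}$ and $C_2\in\mathbb R$, and let $\kappa=C_1\ast_g+C_2\operatorname{Id}\in\Omega^2_2(\mathbb R^4)$. Then $\kappa$ is not decomposable.
   Context: A tensor on $\mathbb R^4$ is constant if its components are constant in a fixed global coordinate system $\{x^i\}_{i=0}^3$. $\varepsilon_{ijkl}$ denotes the Levi-Civita permutation symbol. $\Omega^2_2(\mathbb R^4)$ is the space of tensor fields $\kappa=\frac18\kappa^{ij}_{rs}\,dx^r\wedge dx^s\otimes\partial_i\wedge\partial_j$ (components antisymmetric in $ij$ and $rs$), acting on 2-forms by $\kappa(\frac12F_{ij}dx^i\wedge dx^j)=\frac12G_{ij}dx^i\wedge dx^j$, $G_{ij}=\frac12\kappa^{ab}_{ij}F_{ab}$. $\operatorname{Id}^{ij}_{rs}=\delta^i_r\delta^j_s-\delta^i_s\delta^j_r$. Hodge star: $(\ast_g)^{ij}_{rs}=\sqrt{|\det g|}\,g^{ia}g^{jb}\varepsilon_{abrs}$ with $g^{ij}$ the inverse of $g_{ij}$. For a bivector $A=\frac12A^{ij}\partial_i\wedge\partial_j$ and 2-form $F$, $F(A)=\frac12F_{ij}A^{ij}$. A plane wave for $\kappa$ is a pair $F=\operatorname{Re}\{e^{i\Phi}X\}$, $G=\operatorname{Re}\{e^{i\Phi}Y\}$ with $\Phi:\mathbb R^4\to\mathbb R$, $d\Phi$ constant and nonzero, $X,Y$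 constant complex 2-forms not both zero, solving $dF=0$, $dG=0$, $G=\kappa(F)$. $\kappa$ (constant) is decomposable if there exist nonzero constant bivectors $A,B$ such that every plane wave $F,G$ of $\kappa$ satisfies $F(A)=0$ identically or $F(B)=0$ identically. *)

theory Defs
  imports "HOL-Analysis.Analysis"
begin

text \<open>Coordinates x^0..x^3 of R^4 are indexed by the finite type 4, with
  index numerals 0,1,2,3 :: 4. Points of R^4 are real^4.\<close>

definition levi_civita :: "4 \<Rightarrow> 4 \<Rightarrow> 4 \<Rightarrow> 4 \<Rightarrow> real" where
  "levi_civita a b c d =
     (let p = (\<lambda>i::4. if i = 0 then a else if i = 1 then b else if i = 2 then c else d)
      in if p permutes UNIV then of_int (sign p) else 0)"

definition indefinite_metric :: "real^4^4 \<Rightarrow> bool" where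
  "indefinite_metric g \<longleftrightarrow> transpose g = g \<and> det g \<noteq> 0 \<and>
     (\<exists>v. v \<bullet> (g *v v) > 0) \<and> (\<exists>w. w \<bullet> (g *v w) < 0)"

text \<open>Components kappa^{ij}_{rs} of the Hodge star, indexed as (i j r s).\<close>
definition hodge :: "real^4^4 \<Rightarrow> 4 \<Rightarrow> 4 \<Rightarrow> 4 \<Rightarrow> 4 \<Rightarrow> real" where
  "hodge g i j r s = sqrt \<bar>det g\<bar> *
     (\<Sum>a\<in>UNIV. \<Sum>b\<in>UNIV. matrix_inv g $ i $ a * matrix_inv g $ j $ b * levi_civita a b r s)"

definition Id22 :: "4 \<Rightarrow> 4 \<Rightarrow> 4 \<Rightarrow> 4 \<Rightarrow> real" where
  "Id22 i j r s = (if i = r then 1 else 0) * (if j = s then 1 else 0)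
                - (if i = s then 1 else 0) * (if j = r then 1 else 0)"

definition act :: "(4 \<Rightarrow> 4 \<Rightarrow> 4 \<Rightarrow> 4 \<Rightarrow> real) \<Rightarrow> (4 \<Rightarrow> 4 \<Rightarrow> real) \<Rightarrow> 4 \<Rightarrow> 4 \<Rightarrow> real" where
  "act \<kappa> F i j = (1/2) * (\<Sum>a\<in>UNIV. \<Sum>b\<in>UNIV. \<kappa> a b i j * F a b)"

definition pderiv4 :: "(real^4 \<Rightarrow> real) \<Rightarrow> 4 \<Rightarrow> real^4 \<Rightarrow> real" where
  "pderiv4 f i x = frechet_derivative f (at x) (axis i 1)"

definition closed2 :: "(real^4 \<Rightarrow> 4 \<Rightarrow> 4 \<Rightarrow> real) \<Rightarrow> bool" where
  "closed2 F \<longleftrightarrow> (\<forall>x i j. (\<lambda>y. F y i j) differentiable (at x)) \<and>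
     (\<forall>x i j k. pderiv4 (\<lambda>y. F y j k) i x + pderiv4 (\<lambda>y. F y k i) j x
               + pderiv4 (\<lambda>y. F y i j) k x = 0)"

definition antisym2 :: "(4 \<Rightarrow> 4 \<Rightarrow> 'a::ab_group_add) \<Rightarrow> bool" where
  "antisym2 X \<longleftrightarrow> (\<forall>i j. X i j = - X j i)"

definition plane_wave ::
  "(4 \<Rightarrow> 4 \<Rightarrow> 4 \<Rightarrow> 4 \<Rightarrow> real) \<Rightarrow> (real^4 \<Rightarrow> 4 \<Rightarrow> 4 \<Rightarrow> real) \<Rightarrow> (real^4 \<Rightarrow> 4 \<Rightarrow> 4 \<Rightarrow> real) \<Rightarrow> bool" where
  "plane_wave \<kappa> F G \<longleftrightarrow>
     (\<exists>(\<Phi>::real^4 \<Rightarrow> real) (\<xi>::real^4) (X::4 \<Rightarrow> 4 \<Rightarrow> complex) (Y::4 \<Rightarrow> 4 \<Rightarrow> complex).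
        \<xi> \<noteq> 0 \<and> (\<forall>x. (\<Phi> has_derivative (\<lambda>v. \<xi> \<bullet> v)) (at x)) \<and>
        antisym2 X \<and> antisym2 Y \<and> (X \<noteq> (\<lambda>i j. 0) \<or> Y \<noteq> (\<lambda>i j. 0)) \<and>
        (\<forall>x i j. F x i j = Re (exp (\<i> * complex_of_real (\<Phi> x)) * X i j)) \<and>
        (\<forall>x i j. G x i j = Re (exp (\<i> * complex_of_real (\<Phi> x)) * Y i j)) \<and>
        closed2 F \<and> closed2 G \<and> (\<forall>x. G x = act \<kappa> (F x)))"

definition pair2 :: "(4 \<Rightarrow> 4 \<Rightarrow> real) \<Rightarrow> (4 \<Rightarrow> 4 \<Rightarrow> real) \<Rightarrow> real" where
  "pair2 F A = (1/2) * (\<Sum>i\<in>UNIV. \<Sum>j\<in>UNIV. F i j * A i j)"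

definition decomposable :: "(4 \<Rightarrow> 4 \<Rightarrow> 4 \<Rightarrow> 4 \<Rightarrow> real) \<Rightarrow> bool" where
  "decomposable \<kappa> \<longleftrightarrow>
     (\<exists>A B. antisym2 A \<and> antisym2 B \<and> A \<noteq> (\<lambda>i j. 0) \<and> B \<noteq> (\<lambda>i j. 0) \<and>
        (\<forall>F G. plane_wave \<kappa> F G \<longrightarrow>
           (\<forall>x. pair2 (F x) A = 0) \<or> (\<forall>x. pair2 (F x) B = 0)))"

end

theory Submission
  imports Defs "HOL-Computational_Algebra.Polynomial"
begin


definition lcf :: "(4 \<Rightarrow> 4) \<Rightarrow> real" where
  "lcf p = (if p permutes UNIV then of_int (sign p) else 0)"

definition pf :: "4 \<Rightarrow> 4 \<Rightarrow> 4 \<Rightarrow> 4 \<Rightarrow> 4 \<Rightarrow> 4" where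
  "pf a b c d = (\<lambda>i::4. if i = 0 then a else if i = 1 then b else if i = 2 then c else d)"

lemma lc_pf: "levi_civita a b c d = lcf (pf a b c d)"
  unfolding levi_civita_def lcf_def pf_def Let_def by simp

lemma lcf_swap: assumes "x \<noteq> y" shows "lcf (p \<circ> Transposition.transpose x y) = - lcf p"
proof -
  have t: "Transposition.transpose x y permutes UNIV" by (rule permutes_swap_id) auto
  have e: "p permutes UNIV \<longleftrightarrow> (p \<circ> Transposition.transpose x y) permutes UNIV"
  proof
    assume "p permutes UNIV" thus "(p \<circ> Transposition.transpose x y) permutes UNIV"
      using permutes_compose[OF t] by blast
  next
    assume h: "(p \<circ> Transposition.transpose x y) permutes UNIV"
    have "p = (p \<circ> Transposition.transpose x y) \<circ> Transposition.transpose x y"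
      by (auto simp: fun_eq_iff)
    thus "p permutes UNIV" using permutes_compose[OF t h] by metis
  qed
  show ?thesis
  proof (cases "p permutes UNIV")
    case True
    have "permutation p" by (rule permutes_imp_permutation[OF _ True]) simp
    moreover have "permutation (Transposition.transpose x y)" by (rule permutes_imp_permutation[OF _ t]) simp
    ultimately have "sign (p \<circ> Transposition.transpose x y) = sign p * sign (Transposition.transpose x y)"
      by (rule sign_compose)
    then show ?thesis using True e assms unfolding lcf_def by (simp add: sign_swap_id)
  next
    case False then show ?thesis using e unfolding lcf_def by simp
  qed
qed

lemma lcf_rep: assumes "x \<noteq> y" "p x = p y" shows "lcf p = 0"
proof -
  have "\<not> p permutes UNIV" using assms permutes_inj[of p UNIV] by (auto simp: inj_def)
  thus ?thesis unfolding lcf_def by simp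
qed

lemma n4: "(0::4) \<noteq> 1" "(0::4) \<noteq> 2" "(0::4) \<noteq> 3" "(1::4) \<noteq> 2" "(1::4) \<noteq> 3" "(2::4) \<noteq> 3"
  by simp_all


lemma four0: "(4::4) = 0" by simp

lemma ex4: "(i::4) = 0 \<or> i = 1 \<or> i = 2 \<or> i = 3"
  using exhaust_4[of i] by auto

lemma pf_sw:
  "pf b a c d = pf a b c d \<circ> Transposition.transpose 0 1"
  "pf c b a d = pf a b c d \<circ> Transposition.transpose 0 2"
  "pf d b c a = pf a b c d \<circ> Transposition.transpose 0 3"
  "pf a c b d = pf a b c d \<circ> Transposition.transpose 1 2"
  "pf a d c b = pf a b c d \<circ> Transposition.transpose 1 3"
  "pf a b d c = pf a b c d \<circ> Transposition.transpose 2 3"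
  by (rule ext, use ex4 in \<open>auto simp: pf_def Transposition.transpose_def\<close>)+

lemma lc_sw:
  "levi_civita b a c d = - levi_civita a b c d"
  "levi_civita c b a d = - levi_civita a b c d"
  "levi_civita d b c a = - levi_civita a b c d"
  "levi_civita a c b d = - levi_civita a b c d"
  "levi_civita a d c b = - levi_civita a b c d"
  "levi_civita a b d c = - levi_civita a b c d"
  unfolding lc_pf
  apply (subst pf_sw(1), rule lcf_swap, simp) apply (subst pf_sw(2), rule lcf_swap, simp)
     apply (subst pf_sw(3), rule lcf_swap, simp) apply (subst pf_sw(4), rule lcf_swap, simp)
     apply (subst pf_sw(5), rule lcf_swap, simp) apply (subst pf_sw(6), rule lcf_swap, simp)
  done

lemma lc_rep:
  "levi_civita a a c d = 0" "levi_civita a b a d = 0" "levi_civita a b c a = 0"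
  "levi_civita a b b d = 0" "levi_civita a b c b = 0" "levi_civita a b c c = 0"
  unfolding lc_pf by (rule lcf_rep[of 0 1] lcf_rep[of 0 2] lcf_rep[of 0 3] lcf_rep[of 1 2]
     lcf_rep[of 1 3] lcf_rep[of 2 3], simp, simp add: pf_def)+

lemma card5: "\<not> (distinct [i,c,d,j,k::4])"
proof
  assume "distinct [i,c,d,j,k::4]"
  hence "card {i,c,d,j,k} = 5" by simp
  moreover have "card {i,c,d,j,k} \<le> CARD(4)" by (rule card_mono) auto
  ultimately show False by simp
qed

lemma I5:
  fixes x :: "4 \<Rightarrow> real"
  shows "x i * levi_civita c d j k = x c * levi_civita i d j k + x d * levi_civita c i j k
     + x j * levi_civita c d i k + x k * levi_civita c d j i"
proof -
  have "i = c \<or> i = d \<or> i = j \<or> i = k \<or> c = d \<or> c = j \<or> c = k \<or> d = j \<or> d = k \<or> j = k"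
    using card5[of i c d j k] by auto
  then show ?thesis
  proof (elim disjE)
    assume "c = d" then show ?thesis using lc_sw(1)[of i c j k] by (simp add: lc_rep)
  next
    assume "c = j" then show ?thesis using lc_sw(2)[of i d c k] by (simp add: lc_rep)
  next
    assume "c = k" then show ?thesis using lc_sw(3)[of i d j c] by (simp add: lc_rep)
  next
    assume "d = j" then show ?thesis using lc_sw(4)[of c i d k] by (simp add: lc_rep)
  next
    assume "d = k" then show ?thesis using lc_sw(5)[of c i j d] by (simp add: lc_rep)
  next
    assume "j = k" then show ?thesis using lc_sw(6)[of c d i j] by (simp add: lc_rep)
  qed (simp_all add: lc_rep)
qed

lemma I5c:
  fixes x :: "4 \<Rightarrow> real"
  shows "x i * levi_civita c d j k + x j * levi_civita c d k i + x k * levi_civita c d i j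
     = x c * levi_civita i d j k + x d * levi_civita c i j k"
  using I5[of x i c d j k] lc_sw(6)[of c d i k] lc_sw(6)[of c d i j] by simp



definition bl :: "real^4^4 \<Rightarrow> real^4 \<Rightarrow> real^4 \<Rightarrow> real" where "bl M x y = x \<bullet> (M *v y)"

lemma bl_simps:
 "bl M (x + y) z = bl M x z + bl M y z"
 "bl M x (y + z) = bl M x y + bl M x z"
 "bl M (x - y) z = bl M x z - bl M y z"
 "bl M x (y - z) = bl M x y - bl M x z"
 "bl M ((c::real) *\<^sub>R x) z = c * bl M x z"
 "bl M x ((c::real) *\<^sub>R z) = c * bl M x z"
 "bl M 0 z = 0" "bl M x 0 = 0"
 unfolding bl_def
 apply (rule inner_add_left)
 apply (simp only: matrix_vector_right_distrib inner_add_right)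
 apply (rule inner_diff_left)
 apply (simp only: matrix_vector_mult_diff_distrib inner_diff_right)
 apply (rule inner_scaleR_left)
 apply (simp only: matrix_vector_mult_scaleR inner_scaleR_right)
 apply (rule inner_zero_left)
 apply (simp only: matrix_vector_mult_0_right inner_zero_right)
 done

lemma bl_transpose: "bl (transpose M) x y = bl M y x"
  unfolding bl_def transpose_matrix_vector by (metis dot_lmul_matrix inner_commute)

lemma bl_sym: "transpose M = M \<Longrightarrow> bl M x y = bl M y x"
  by (metis bl_transpose)

lemma bl_axis: "bl M (axis i 1) (axis j 1) = M $ i $ j"
  unfolding bl_def by (simp add: inner_axis' matrix_vector_mult_basis column_def)

definition amat :: "(4 \<Rightarrow> 4 \<Rightarrow> real) \<Rightarrow> real^4^4" where "amat A = (\<chi> i j. A i j)"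

lemma bl_neg: "bl (- M) x y = - bl M x y"
  unfolding bl_def by (simp add: matrix_vector_mult_def inner_vec_def sum_negf)

lemma bl_amat_antisym: "antisym2 A \<Longrightarrow> bl (amat A) x y = - bl (amat A) y x"
proof -
  assume a: "antisym2 A"
  have "transpose (amat A) = - amat A"
    unfolding vec_eq_iff
  proof (intro allI)
    fix i j
    show "transpose (amat A) $ i $ j = (- amat A) $ i $ j"
      using a[unfolded antisym2_def, rule_format, of j i] by (simp add: amat_def transpose_def)
  qed
  then show ?thesis by (metis bl_transpose bl_neg)
qed

lemma bl_amat_self: "antisym2 A \<Longrightarrow> bl (amat A) x x = 0"
  using bl_amat_antisym[of A x x] by simp

lemma ker_mult:
  fixes \<phi> \<eta> :: "real^4"
  assumes "\<eta> $ i \<noteq> 0" "\<And>x. \<eta> \<bullet> x = 0 \<Longrightarrow> \<phi> \<bullet> x = 0"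
  shows "\<phi> = (\<phi> $ i / \<eta> $ i) *\<^sub>R \<eta>"
  unfolding vec_eq_iff
proof
  fix j
  have "\<eta> \<bullet> (\<eta> $ i *\<^sub>R axis j 1 - \<eta> $ j *\<^sub>R axis i 1) = 0"
    by (simp add: inner_diff_right inner_axis mult.commute)
  then have "\<phi> \<bullet> (\<eta> $ i *\<^sub>R axis j 1 - \<eta> $ j *\<^sub>R axis i 1) = 0" by (rule assms(2))
  then have "\<eta> $ i * \<phi> $ j = \<eta> $ j * \<phi> $ i" by (simp add: inner_diff_right inner_axis mult.commute)
  then show "\<phi> $ j = ((\<phi> $ i / \<eta> $ i) *\<^sub>R \<eta>) $ j" using assms(1) by (simp add: field_simps)
qed

lemma vec_nz: "(v::real^4) \<noteq> 0 \<Longrightarrow> \<exists>i. v $ i \<noteq> 0"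
  by (metis vec_eq_iff zero_index)

lemma two_others: "\<exists>j k. j \<noteq> (i::4) \<and> k \<noteq> i \<and> j \<noteq> k"
  using ex4[of i] apply (elim disjE)
  apply (rule exI[of _ 1], rule exI[of _ 2], simp)
  apply (rule exI[of _ 0], rule exI[of _ 2], simp)
  apply (rule exI[of _ 0], rule exI[of _ 1], simp)
  apply (rule exI[of _ 0], rule exI[of _ 1], simp)
  done



definition RR :: "real^4^4 \<Rightarrow> real^4 \<Rightarrow> real^4 \<Rightarrow> real^4" where
  "RR h z0 v = bl h v v *\<^sub>R z0 - (2 * bl h z0 v) *\<^sub>R v"
definition AA :: "real^4^4 \<Rightarrow> real^4 \<Rightarrow> real^4 \<Rightarrow> real^4 \<Rightarrow> real^4 \<Rightarrow> real^4" where
  "AA h z0 v z w = bl h (RR h z0 v) w *\<^sub>R z - bl h (RR h z0 v) z *\<^sub>R w"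
definition PH :: "real^4^4 \<Rightarrow> real^4 \<Rightarrow> (4 \<Rightarrow> 4 \<Rightarrow> real) \<Rightarrow> real^4 \<Rightarrow> real^4 \<Rightarrow> real^4 \<Rightarrow> real" where
  "PH h z0 A v z w = bl (amat A) (RR h z0 v) (AA h z0 v z w)"

lemma bl_uminus: "bl M (- x) y = - bl M x y" "bl M x (- y) = - bl M x y"
  using bl_simps(5)[of M "-1" x y] bl_simps(6)[of M x "-1" y] by simp_all

lemmas bls = bl_simps bl_uminus

lemma null_RR: assumes "transpose h = h" "bl h z0 z0 = 0" shows "bl h (RR h z0 v) (RR h z0 v) = 0"
proof -
  have s: "bl h v z0 = bl h z0 v" using bl_sym[OF assms(1)] by blast
  show ?thesis unfolding RR_def using assms(2) s by (simp add: bl_simps algebra_simps)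
qed

lemma orth_AA: "bl h (RR h z0 v) (AA h z0 v z w) = 0"
  unfolding AA_def by (simp add: bl_simps)

lemma exists_null:
  fixes h :: "real^4^4"
  assumes sym: "transpose h = h" and p: "bl h p p > 0" and n: "bl h n n < 0"
  shows "\<exists>z. z \<noteq> 0 \<and> bl h z z = 0"
proof -
  define P where "P = bl h p p"
  define b where "b = bl h p n"
  define N where "N = bl h n n"
  define s where "s = sqrt (b^2 - P * N)"
  define t where "t = (s - b) / P"
  have P0: "P > 0" using p P_def by simp
  have N0: "N < 0" using n N_def by simp
  have "b^2 - P * N \<ge> 0" using P0 N0 by (smt (verit) mult_pos_neg zero_le_power2)
  then have ss: "s^2 = b^2 - P * N" unfolding s_def by simp
  have Pt: "P * t = s - b" unfolding t_def using P0 by simp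
  have "bl h (t *\<^sub>R p + n) (t *\<^sub>R p + n) = t * t * P + 2 * t * b + N"
    using bl_sym[OF sym, of n p] unfolding P_def b_def N_def by (simp add: bl_simps algebra_simps)
  also have "\<dots> = 0"
  proof -
    have "P * (t * t * P + 2 * t * b + N) = (P*t)^2 + 2 * b * (P * t) + P * N" by (simp add: algebra_simps power2_eq_square)
    also have "\<dots> = 0" unfolding Pt using ss by (simp add: algebra_simps power2_eq_square)
    finally show ?thesis using P0 by simp
  qed
  finally have 1: "bl h (t *\<^sub>R p + n) (t *\<^sub>R p + n) = 0" .
  have "t *\<^sub>R p + n \<noteq> 0"
  proof
    assume "t *\<^sub>R p + n = 0"
    then have "n = (- t) *\<^sub>R p" by (simp add: eq_neg_iff_add_eq_0 add.commute)
    then have "N = t * t * P" unfolding N_def P_def by (simp add: bls)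
    then show False using N0 P0 by (smt (verit) mult_nonneg_nonneg zero_le_square mult_pos_pos)
  qed
  then show ?thesis using 1 by blast
qed



lemma E0:
  fixes h :: "real^4^4" and z0 :: "real^4"
  assumes sym: "transpose h = h" and nd: "\<And>y. h *v y = 0 \<Longrightarrow> y = 0"
    and z0: "z0 \<noteq> 0" "bl h z0 z0 = 0"
  shows "\<exists>y. bl h z0 y = 0 \<and> bl h y y \<noteq> 0"
proof (rule ccontr)
  assume "\<not> ?thesis"
  then have H: "\<And>y. bl h z0 y = 0 \<Longrightarrow> bl h y y = 0" by blast
  define \<eta> where "\<eta> = h *v z0"
  have Bx: "bl h z0 x = \<eta> \<bullet> x" for x
    using bl_sym[OF sym, of z0 x] unfolding bl_def \<eta>_def by (simp add: inner_commute)
  have "\<eta> \<noteq> 0" using nd z0(1) unfolding \<eta>_def by blast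
  then obtain i where i: "\<eta> $ i \<noteq> 0" using vec_nz by blast
  have a: "bl h y y' = 0" if "bl h z0 y = 0" "bl h z0 y' = 0" for y y'
  proof -
    have "bl h z0 (y + y') = 0" using that by (simp add: bls)
    then have "bl h (y + y') (y + y') = 0" by (rule H)
    moreover have "bl h (y + y') (y + y') = 2 * bl h y y'"
      using H[OF that(1)] H[OF that(2)] bl_sym[OF sym, of y' y] by (simp add: bls)
    ultimately show ?thesis by simp
  qed
  have b: "\<exists>l. y = l *\<^sub>R z0" if "bl h z0 y = 0" for y
  proof -
    have "(h *v y) \<bullet> x = 0" if "\<eta> \<bullet> x = 0" for x
    proof -
      have "(h *v y) \<bullet> x = bl h x y" unfolding bl_def by (simp add: inner_commute)
      also have "\<dots> = 0" using a[of x y] that \<open>bl h z0 y = 0\<close> Bx by simp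
      finally show ?thesis .
    qed
    then have "h *v y = ((h *v y) $ i / \<eta> $ i) *\<^sub>R \<eta>" using ker_mult[OF i] by blast
    then have "h *v (y - ((h *v y) $ i / \<eta> $ i) *\<^sub>R z0) = 0"
      unfolding \<eta>_def by (simp add: matrix_vector_mult_diff_distrib matrix_vector_mult_scaleR)
    then show ?thesis using nd by (metis eq_iff_diff_eq_0)
  qed
  obtain j k where jk: "j \<noteq> i" "k \<noteq> i" "j \<noteq> k" using two_others by blast
  define yj where "yj = \<eta> $ i *\<^sub>R axis j 1 - \<eta> $ j *\<^sub>R axis i (1::real)"
  define yk where "yk = \<eta> $ i *\<^sub>R axis k 1 - \<eta> $ k *\<^sub>R axis i (1::real)"
  have "bl h z0 yj = 0" unfolding Bx yj_def by (simp add: inner_diff_right inner_axis mult.commute)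
  then obtain lj where lj: "yj = lj *\<^sub>R z0" using b by blast
  have "bl h z0 yk = 0" unfolding Bx yk_def by (simp add: inner_diff_right inner_axis mult.commute)
  then obtain lk where lk: "yk = lk *\<^sub>R z0" using b by blast
  have c1: "lj * z0 $ j = \<eta> $ i" using arg_cong[OF lj, of "\<lambda>v. v $ j"] jk unfolding yj_def by (simp add: axis_def)
  have c2: "lj * z0 $ k = 0" using arg_cong[OF lj, of "\<lambda>v. v $ k"] jk unfolding yj_def by (simp add: axis_def)
  have c3: "lk * z0 $ k = \<eta> $ i" using arg_cong[OF lk, of "\<lambda>v. v $ k"] jk unfolding yk_def by (simp add: axis_def)
  have "lj \<noteq> 0" using c1 i by auto
  then have "z0 $ k = 0" using c2 by simp
  then show False using c3 i by simp
qed



lemma E1: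
  fixes h :: "real^4^4" and z0 :: "real^4" and A :: "4 \<Rightarrow> 4 \<Rightarrow> real"
  assumes sym: "transpose h = h" and nd: "\<And>y. h *v y = 0 \<Longrightarrow> y = 0"
    and z0: "z0 \<noteq> 0" "bl h z0 z0 = 0" and an: "antisym2 A"
    and P0: "\<And>v z w. PH h z0 A v z w = 0"
  shows "A i j = 0"
proof -
  define al where "al = bl (amat A)"
  have alanti: "al x y = - al y x" for x y unfolding al_def using bl_amat_antisym[OF an] by blast
  have alself: "al x x = 0" for x unfolding al_def using bl_amat_self[OF an] by blast
  have hs: "bl h x y = bl h y x" for x y using bl_sym[OF sym] by blast
  define \<eta> where "\<eta> = h *v z0"
  have "\<eta> \<noteq> 0" using nd z0(1) unfolding \<eta>_def by blast
  then obtain i0 where i0: "\<eta> $ i0 \<noteq> 0" using vec_nz by blast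
  define w0 where "w0 = (1 / \<eta> $ i0) *\<^sub>R axis i0 (1::real)"
  have Bw0: "bl h z0 w0 = 1"
  proof -
    have "bl h z0 w0 = bl h w0 z0" by (rule hs)
    also have "\<dots> = w0 \<bullet> \<eta>" unfolding bl_def \<eta>_def ..
    also have "\<dots> = 1" unfolding w0_def using i0 by (simp add: inner_axis')
    finally show ?thesis .
  qed
  obtain y where y: "bl h z0 y = 0" "bl h y y \<noteq> 0" using E0[OF sym nd z0] by blast
  define c where "c = al z0 w0"
  have S1: "al z0 z = c * bl h z0 z" for z
  proof -
    have "PH h z0 A y z w0 = (bl h y y)^2 * (al z0 z - bl h z0 z * c)"
      unfolding PH_def AA_def RR_def al_def[symmetric] c_def
      using y(1) Bw0 by (simp add: bls algebra_simps power2_eq_square al_def)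
    then have "(bl h y y)^2 * (al z0 z - bl h z0 z * c) = 0" using P0 by simp
    then show ?thesis using y(2) by (simp add: algebra_simps)
  qed
  have S2: "bl h z0 v * al v z = c * (bl h v v * bl h z0 z - bl h z0 v * bl h v z)"
    if Bv: "bl h z0 v \<noteq> 0" for v z
  proof -
    have f1: "al v z0 = - (c * bl h z0 v)" using alanti[of v z0] S1[of v] by simp
    have f2: "bl h v z0 = bl h z0 v" by (rule hs)
    have "PH h z0 A v z z0 = 4 * (bl h z0 v)^2 *
        (bl h z0 v * al v z - c * (bl h v v * bl h z0 z - bl h z0 v * bl h v z))"
      unfolding PH_def AA_def RR_def al_def[symmetric]
      using z0(2) f1 f2 S1[of z] alself[of z0]
      by (simp add: bls algebra_simps power2_eq_square al_def)
    then have "4 * (bl h z0 v)^2 *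
        (bl h z0 v * al v z - c * (bl h v v * bl h z0 z - bl h z0 v * bl h v z)) = 0" using P0 by simp
    then show ?thesis using Bv by simp
  qed
  have c0: "c = 0"
  proof -
    define v1 where "v1 = y + w0"
    have Bv1: "bl h z0 v1 = 1" unfolding v1_def using y(1) Bw0 by (simp add: bls)
    have e1: "al v1 w0 = c * (bl h v1 v1 - bl h v1 w0)" using S2[of v1 w0] Bv1 Bw0 by simp
    have e2: "al w0 v1 = c * (bl h w0 w0 - bl h w0 v1)" using S2[of w0 v1] Bv1 Bw0 by simp
    have "0 = al v1 w0 + al w0 v1" using alanti[of v1 w0] by simp
    also have "\<dots> = c * (bl h v1 v1 - bl h v1 w0 + bl h w0 w0 - bl h w0 v1)"
      unfolding e1 e2 by (simp add: algebra_simps)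
    also have "bl h v1 v1 - bl h v1 w0 + bl h w0 w0 - bl h w0 v1 = bl h y y"
      unfolding v1_def using hs[of y w0] by (simp add: bls)
    finally show ?thesis using y(2) by simp
  qed
  have S4: "al v z = 0" for v z
  proof -
    define v' where "v' = v + (1 - bl h z0 v) *\<^sub>R w0"
    have Bv': "bl h z0 v' = 1" unfolding v'_def using Bw0 by (simp add: bls)
    have 1: "al v' z = 0" using S2[of v' z] Bv' c0 by simp
    have 2: "al w0 z = 0" using S2[of w0 z] Bw0 c0 by simp
    have "al v' z = al v z + (1 - bl h z0 v) * al w0 z" unfolding v'_def al_def by (simp add: bls)
    then show ?thesis using 1 2 by simp
  qed
  have "A i j = al (axis i 1) (axis j 1)" unfolding al_def bl_axis amat_def by simp
  then show ?thesis using S4 by simp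
qed



definition polyfun :: "(real \<Rightarrow> real) \<Rightarrow> bool" where
  "polyfun f \<longleftrightarrow> (\<exists>p. \<forall>t. f t = poly p t)"

lemma pf_const: "polyfun (\<lambda>t. c)"
  unfolding polyfun_def by (rule exI[of _ "[:c:]"]) simp

lemma pf_id: "polyfun (\<lambda>t. t)"
  unfolding polyfun_def by (rule exI[of _ "[:0, 1:]"]) simp

lemma pf_add: "polyfun f \<Longrightarrow> polyfun g \<Longrightarrow> polyfun (\<lambda>t. f t + g t)"
  unfolding polyfun_def by (metis poly_add)

lemma pf_diff: "polyfun f \<Longrightarrow> polyfun g \<Longrightarrow> polyfun (\<lambda>t. f t - g t)"
  unfolding polyfun_def by (metis poly_diff)

lemma pf_mult: "polyfun f \<Longrightarrow> polyfun g \<Longrightarrow> polyfun (\<lambda>t. f t * g t)"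
  unfolding polyfun_def by (metis poly_mult)

lemma pf_sum: "finite S \<Longrightarrow> (\<And>i. i \<in> S \<Longrightarrow> polyfun (f i)) \<Longrightarrow> polyfun (\<lambda>t. \<Sum>i\<in>S. f i t)"
proof (induction S rule: finite_induct)
  case empty then show ?case using pf_const[of 0] by simp
next
  case (insert x F)
  then show ?case using pf_add[of "f x" "\<lambda>t. \<Sum>i\<in>F. f i t"] by simp
qed

definition polyvec :: "(real \<Rightarrow> real^4) \<Rightarrow> bool" where
  "polyvec f \<longleftrightarrow> (\<forall>i. polyfun (\<lambda>t. f t $ i))"

lemma pv_line: "polyvec (\<lambda>t. a + t *\<^sub>R b)"
  unfolding polyvec_def by (auto intro!: pf_add pf_mult pf_const pf_id)

lemma pv_add: "polyvec f \<Longrightarrow> polyvec g \<Longrightarrow> polyvec (\<lambda>t. f t + g t)"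
  unfolding polyvec_def by (auto intro!: pf_add)

lemma pv_diff: "polyvec f \<Longrightarrow> polyvec g \<Longrightarrow> polyvec (\<lambda>t. f t - g t)"
  unfolding polyvec_def by (auto intro!: pf_diff)

lemma pv_scale: "polyfun c \<Longrightarrow> polyvec f \<Longrightarrow> polyvec (\<lambda>t. c t *\<^sub>R f t)"
  unfolding polyvec_def by (auto intro!: pf_mult)

lemma pv_const: "polyvec (\<lambda>t. a)"
  unfolding polyvec_def by (auto intro!: pf_const)

lemma pf_bl: "polyvec f \<Longrightarrow> polyvec g \<Longrightarrow> polyfun (\<lambda>t. bl M (f t) (g t))"
  unfolding bl_def inner_vec_def matrix_vector_mult_def polyvec_def
  by (auto intro!: pf_sum pf_mult pf_const)

lemma pf_PH:
  assumes "polyvec v" "polyvec z" "polyvec w"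
  shows "polyfun (\<lambda>t. PH h z0 A (v t) (z t) (w t))"
proof -
  have R: "polyvec (\<lambda>t. RR h z0 (v t))"
    unfolding RR_def using assms by (intro pv_diff pv_scale pf_bl pv_const pf_mult pf_const)
  have AA: "polyvec (\<lambda>t. AA h z0 (v t) (z t) (w t))"
    unfolding AA_def using assms R by (intro pv_diff pv_scale pf_bl)
  show ?thesis unfolding PH_def using R AA by (rule pf_bl)
qed

lemma two_nonzero:
  assumes "polyfun f" "polyfun g" "f a \<noteq> 0" "g b \<noteq> 0"
  shows "\<exists>t. f t \<noteq> 0 \<and> g t \<noteq> 0"
proof -
  obtain p where p: "\<And>t. f t = poly p t" using assms(1) unfolding polyfun_def by blast
  obtain q where q: "\<And>t. g t = poly q t" using assms(2) unfolding polyfun_def by blast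
  have "p \<noteq> 0" using assms(3) p by auto
  have "q \<noteq> 0" using assms(4) q by auto
  have "finite ({t. poly p t = 0} \<union> {t. poly q t = 0})"
    using poly_roots_finite[OF \<open>p \<noteq> 0\<close>] poly_roots_finite[OF \<open>q \<noteq> 0\<close>] by simp
  then obtain t where "t \<notin> {t. poly p t = 0} \<union> {t. poly q t = 0}"
    using ex_new_if_finite[OF infinite_UNIV_char_0] by blast
  then show ?thesis using p q by auto
qed

lemma E_both:
  fixes h :: "real^4^4" and z0 :: "real^4" and A B :: "4 \<Rightarrow> 4 \<Rightarrow> real"
  assumes sym: "transpose h = h" and nd: "\<And>y. h *v y = 0 \<Longrightarrow> y = 0"
    and z0: "z0 \<noteq> 0" "bl h z0 z0 = 0" and an: "antisym2 A" "antisym2 B"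
    and nzA: "A \<noteq> (\<lambda>i j. 0)" and nzB: "B \<noteq> (\<lambda>i j. 0)"
  shows "\<exists>v z w. PH h z0 A v z w \<noteq> 0 \<and> PH h z0 B v z w \<noteq> 0"
proof -
  obtain v1 z1 w1 where 1: "PH h z0 A v1 z1 w1 \<noteq> 0"
    using E1[OF sym nd z0 an(1)] nzA by (metis ext)
  obtain v2 z2 w2 where 2: "PH h z0 B v2 z2 w2 \<noteq> 0"
    using E1[OF sym nd z0 an(2)] nzB by (metis ext)
  define v where "v t = v1 + t *\<^sub>R (v2 - v1)" for t
  define z where "z t = z1 + t *\<^sub>R (z2 - z1)" for t
  define w where "w t = w1 + t *\<^sub>R (w2 - w1)" for t
  have pv: "polyvec v" "polyvec z" "polyvec w" unfolding v_def z_def w_def by (rule pv_line)+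
  have "\<exists>t. PH h z0 A (v t) (z t) (w t) \<noteq> 0 \<and> PH h z0 B (v t) (z t) (w t) \<noteq> 0"
    by (rule two_nonzero[where a=0 and b=1], rule pf_PH[OF pv], rule pf_PH[OF pv])
       (use 1 2 in \<open>simp_all add: v_def z_def w_def\<close>)
  then show ?thesis by blast
qed




lemma sum_swap22: "(\<Sum>a\<in>A. \<Sum>b\<in>B. \<Sum>c\<in>C. \<Sum>d\<in>D. F a b c d) = (\<Sum>c\<in>C. \<Sum>d\<in>D. \<Sum>a\<in>A. \<Sum>b\<in>B. F a b c d)"
proof -
  have "(\<Sum>a\<in>A. \<Sum>b\<in>B. \<Sum>c\<in>C. \<Sum>d\<in>D. F a b c d) = (\<Sum>a\<in>A. \<Sum>c\<in>C. \<Sum>b\<in>B. \<Sum>d\<in>D. F a b c d)"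
    by (rule sum.cong[OF refl], rule sum.swap)
  also have "\<dots> = (\<Sum>c\<in>C. \<Sum>a\<in>A. \<Sum>b\<in>B. \<Sum>d\<in>D. F a b c d)" by (rule sum.swap)
  also have "\<dots> = (\<Sum>c\<in>C. \<Sum>a\<in>A. \<Sum>d\<in>D. \<Sum>b\<in>B. F a b c d)"
    by (rule sum.cong[OF refl], rule sum.cong[OF refl], rule sum.swap)
  also have "\<dots> = (\<Sum>c\<in>C. \<Sum>d\<in>D. \<Sum>a\<in>A. \<Sum>b\<in>B. F a b c d)" by (rule sum.cong[OF refl], rule sum.swap)
  finally show ?thesis .
qed

lemma sum_swap3: "(\<Sum>c\<in>C. \<Sum>a\<in>A. \<Sum>b\<in>B. F a b c) = (\<Sum>a\<in>A. \<Sum>b\<in>B. \<Sum>c\<in>C. F a b c)"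
proof -
  have "(\<Sum>c\<in>C. \<Sum>a\<in>A. \<Sum>b\<in>B. F a b c) = (\<Sum>a\<in>A. \<Sum>c\<in>C. \<Sum>b\<in>B. F a b c)" by (rule sum.swap)
  also have "\<dots> = (\<Sum>a\<in>A. \<Sum>b\<in>B. \<Sum>c\<in>C. F a b c)" by (rule sum.cong[OF refl], rule sum.swap)
  finally show ?thesis .
qed

lemma cyc_T:
  fixes M :: "4 \<Rightarrow> 4 \<Rightarrow> real" and x :: "4 \<Rightarrow> real"
  assumes A1: "\<And>d. (\<Sum>c\<in>UNIV. M c d * x c) = 0" and A2: "\<And>c. (\<Sum>d\<in>UNIV. M c d * x d) = 0"
  shows "x i * (\<Sum>c\<in>UNIV. \<Sum>d\<in>UNIV. M c d * levi_civita c d j k)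
       + x j * (\<Sum>c\<in>UNIV. \<Sum>d\<in>UNIV. M c d * levi_civita c d k i)
       + x k * (\<Sum>c\<in>UNIV. \<Sum>d\<in>UNIV. M c d * levi_civita c d i j) = 0"
proof -
  have "x i * (\<Sum>c\<in>UNIV. \<Sum>d\<in>UNIV. M c d * levi_civita c d j k)
       + x j * (\<Sum>c\<in>UNIV. \<Sum>d\<in>UNIV. M c d * levi_civita c d k i)
       + x k * (\<Sum>c\<in>UNIV. \<Sum>d\<in>UNIV. M c d * levi_civita c d i j)
     = (\<Sum>c\<in>UNIV. \<Sum>d\<in>UNIV. M c d * (x i * levi_civita c d j k + x j * levi_civita c d k i
          + x k * levi_civita c d i j))"
    by (simp add: sum_distrib_left sum.distrib algebra_simps)
  also have "\<dots> = (\<Sum>c\<in>UNIV. \<Sum>d\<in>UNIV. M c d * (x c * levi_civita i d j k + x d * levi_civita c i j k))"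
    by (simp only: I5c)
  also have "\<dots> = (\<Sum>c\<in>UNIV. \<Sum>d\<in>UNIV. M c d * x c * levi_civita i d j k)
       + (\<Sum>c\<in>UNIV. \<Sum>d\<in>UNIV. M c d * x d * levi_civita c i j k)"
    by (simp add: distrib_left sum.distrib mult.assoc)
  also have "(\<Sum>c\<in>UNIV. \<Sum>d\<in>UNIV. M c d * x c * levi_civita i d j k) = 0"
    by (subst sum.swap) (simp add: sum_distrib_right[symmetric] A1)
  also have "(\<Sum>c\<in>UNIV. \<Sum>d\<in>UNIV. M c d * x d * levi_civita c i j k) = 0"
    by (simp add: sum_distrib_right[symmetric] A2)
  finally show ?thesis by simp
qed

lemma act_hodge:
  "act (hodge g) X r s = (sqrt \<bar>det g\<bar> / 2) * (\<Sum>c\<in>UNIV. \<Sum>d\<in>UNIV.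
      (\<Sum>a\<in>UNIV. \<Sum>b\<in>UNIV. matrix_inv g $ a $ c * matrix_inv g $ b $ d * X a b) * levi_civita c d r s)"
proof -
  have "act (hodge g) X r s = (sqrt \<bar>det g\<bar> / 2) * (\<Sum>a\<in>UNIV. \<Sum>b\<in>UNIV. \<Sum>c\<in>UNIV. \<Sum>d\<in>UNIV.
      matrix_inv g $ a $ c * matrix_inv g $ b $ d * X a b * levi_civita c d r s)"
    unfolding act_def hodge_def by (simp add: sum_distrib_left sum_distrib_right mult_ac)
  also have "\<dots> = (sqrt \<bar>det g\<bar> / 2) * (\<Sum>c\<in>UNIV. \<Sum>d\<in>UNIV. \<Sum>a\<in>UNIV. \<Sum>b\<in>UNIV.
      matrix_inv g $ a $ c * matrix_inv g $ b $ d * X a b * levi_civita c d r s)"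
    by (subst sum_swap22) (rule refl)
  also have "\<dots> = (sqrt \<bar>det g\<bar> / 2) * (\<Sum>c\<in>UNIV. \<Sum>d\<in>UNIV.
      (\<Sum>a\<in>UNIV. \<Sum>b\<in>UNIV. matrix_inv g $ a $ c * matrix_inv g $ b $ d * X a b) * levi_civita c d r s)"
    by (simp add: sum_distrib_right)
  finally show ?thesis .
qed

lemma dbl_sum_wedge:
  fixes u v p q :: "4 \<Rightarrow> real"
  shows "(\<Sum>a\<in>UNIV. \<Sum>b\<in>UNIV. u a * v b * (p a * q b - p b * q a))
     = (\<Sum>a\<in>UNIV. u a * p a) * (\<Sum>b\<in>UNIV. v b * q b) - (\<Sum>a\<in>UNIV. u a * q a) * (\<Sum>b\<in>UNIV. v b * p b)"
proof -
  have "(\<Sum>a\<in>UNIV. \<Sum>b\<in>UNIV. u a * v b * (p a * q b - p b * q a))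
     = (\<Sum>a\<in>UNIV. \<Sum>b\<in>UNIV. (u a * p a) * (v b * q b)) - (\<Sum>a\<in>UNIV. \<Sum>b\<in>UNIV. (u a * q a) * (v b * p b))"
    by (simp add: sum_subtractf[symmetric] algebra_simps)
  also have "\<dots> = (\<Sum>a\<in>UNIV. u a * p a) * (\<Sum>b\<in>UNIV. v b * q b) - (\<Sum>a\<in>UNIV. u a * q a) * (\<Sum>b\<in>UNIV. v b * p b)" by (simp only: sum_product)
  finally show ?thesis .
qed

lemma mv_comp: "(h *v x) $ a = (\<Sum>c\<in>UNIV. h $ a $ c * x $ c)"
  by (simp add: matrix_vector_mult_def)

lemma inner4: "(x::real^4) \<bullet> y = (\<Sum>i\<in>UNIV. x $ i * y $ i)"
  by (simp add: inner_vec_def)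

lemma contr:
  fixes h :: "real^4^4" and \<xi> a :: "real^4"
  assumes q: "\<xi> \<bullet> (h *v \<xi>) = 0" and o: "a \<bullet> (h *v \<xi>) = 0"
  shows "(\<Sum>c\<in>UNIV. (\<Sum>a'\<in>UNIV. \<Sum>b\<in>UNIV. h$a'$c * h$b$d * (\<xi>$a' * a$b - \<xi>$b * a$a')) * \<xi>$c) = 0"
    and "(\<Sum>d\<in>UNIV. (\<Sum>a'\<in>UNIV. \<Sum>b\<in>UNIV. h$a'$c * h$b$d * (\<xi>$a' * a$b - \<xi>$b * a$a')) * \<xi>$d) = 0"
proof -
  have "(\<Sum>c\<in>UNIV. (\<Sum>a'\<in>UNIV. \<Sum>b\<in>UNIV. h$a'$c * h$b$d * (\<xi>$a' * a$b - \<xi>$b * a$a')) * \<xi>$c)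
     = (\<Sum>a'\<in>UNIV. \<Sum>b\<in>UNIV. \<Sum>c\<in>UNIV. h$a'$c * h$b$d * (\<xi>$a' * a$b - \<xi>$b * a$a') * \<xi>$c)"
    unfolding sum_distrib_right by (rule sum_swap3)
  also have "\<dots> = (\<Sum>a'\<in>UNIV. \<Sum>b\<in>UNIV. (h *v \<xi>)$a' * h$b$d * (\<xi>$a' * a$b - \<xi>$b * a$a'))"
    by (simp add: mv_comp sum_distrib_left sum_distrib_right algebra_simps)
  also have "\<dots> = (\<Sum>a'\<in>UNIV. (h *v \<xi>)$a' * \<xi>$a') * (\<Sum>b\<in>UNIV. h$b$d * a$b)
        - (\<Sum>a'\<in>UNIV. (h *v \<xi>)$a' * a$a') * (\<Sum>b\<in>UNIV. h$b$d * \<xi>$b)"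
    by (rule dbl_sum_wedge)
  also have "\<dots> = 0" using q o by (simp add: inner4 mult.commute)
  finally show "(\<Sum>c\<in>UNIV. (\<Sum>a'\<in>UNIV. \<Sum>b\<in>UNIV. h$a'$c * h$b$d * (\<xi>$a' * a$b - \<xi>$b * a$a')) * \<xi>$c) = 0" .
  have "(\<Sum>d\<in>UNIV. (\<Sum>a'\<in>UNIV. \<Sum>b\<in>UNIV. h$a'$c * h$b$d * (\<xi>$a' * a$b - \<xi>$b * a$a')) * \<xi>$d)
     = (\<Sum>a'\<in>UNIV. \<Sum>b\<in>UNIV. \<Sum>d\<in>UNIV. h$a'$c * h$b$d * (\<xi>$a' * a$b - \<xi>$b * a$a') * \<xi>$d)"
    unfolding sum_distrib_right by (rule sum_swap3)
  also have "\<dots> = (\<Sum>a'\<in>UNIV. \<Sum>b\<in>UNIV. h$a'$c * (h *v \<xi>)$b * (\<xi>$a' * a$b - \<xi>$b * a$a'))"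
    by (simp add: mv_comp sum_distrib_left sum_distrib_right algebra_simps)
  also have "\<dots> = (\<Sum>a'\<in>UNIV. h$a'$c * \<xi>$a') * (\<Sum>b\<in>UNIV. (h *v \<xi>)$b * a$b)
        - (\<Sum>a'\<in>UNIV. h$a'$c * a$a') * (\<Sum>b\<in>UNIV. (h *v \<xi>)$b * \<xi>$b)"
    by (rule dbl_sum_wedge)
  also have "\<dots> = 0" using q o by (simp add: inner4 mult.commute)
  finally show "(\<Sum>d\<in>UNIV. (\<Sum>a'\<in>UNIV. \<Sum>b\<in>UNIV. h$a'$c * h$b$d * (\<xi>$a' * a$b - \<xi>$b * a$a')) * \<xi>$d) = 0" .
qed

definition cyclic :: "real^4 \<Rightarrow> (4 \<Rightarrow> 4 \<Rightarrow> real) \<Rightarrow> bool" where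
  "cyclic \<xi> Z \<longleftrightarrow> (\<forall>i j k. \<xi>$i * Z j k + \<xi>$j * Z k i + \<xi>$k * Z i j = 0)"

lemma closed2_cos:
  fixes \<xi> :: "real^4" and Z :: "4 \<Rightarrow> 4 \<Rightarrow> real"
  assumes "cyclic \<xi> Z"
  shows "closed2 (\<lambda>y i j. cos (\<xi> \<bullet> y) * Z i j)"
proof -
  have d: "((\<lambda>y. cos (\<xi> \<bullet> y) * c) has_derivative (\<lambda>v. - sin (\<xi> \<bullet> x) * (\<xi> \<bullet> v) * c)) (at x)" for x c
    by (auto intro!: derivative_eq_intros simp: algebra_simps)
  have p: "pderiv4 (\<lambda>y. cos (\<xi> \<bullet> y) * c) i x = - sin (\<xi> \<bullet> x) * \<xi>$i * c" for x c i
    unfolding pderiv4_def using frechet_derivative_at[OF d[where x=x and c=c], symmetric] by (simp add: inner_axis)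
  show ?thesis unfolding closed2_def
  proof (intro conjI allI)
    fix x i j show "(\<lambda>y. cos (\<xi> \<bullet> y) * Z i j) differentiable at x" using d differentiable_def by blast
  next
    fix x i j k
    have "\<xi>$i * Z j k + \<xi>$j * Z k i + \<xi>$k * Z i j = 0" using assms unfolding cyclic_def by blast
    then have "- sin (\<xi> \<bullet> x) * (\<xi>$i * Z j k + \<xi>$j * Z k i + \<xi>$k * Z i j) = 0" by simp
    moreover have "pderiv4 (\<lambda>y. cos (\<xi> \<bullet> y) * Z j k) i x + pderiv4 (\<lambda>y. cos (\<xi> \<bullet> y) * Z k i) j x
           + pderiv4 (\<lambda>y. cos (\<xi> \<bullet> y) * Z i j) k x = - sin (\<xi> \<bullet> x) * (\<xi>$i * Z j k + \<xi>$j * Z k i + \<xi>$k * Z i j)"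
      unfolding p by (simp add: algebra_simps)
    ultimately show "pderiv4 (\<lambda>y. cos (\<xi> \<bullet> y) * Z j k) i x + pderiv4 (\<lambda>y. cos (\<xi> \<bullet> y) * Z k i) j x
           + pderiv4 (\<lambda>y. cos (\<xi> \<bullet> y) * Z i j) k x = 0"
      by simp
  qed
qed

lemma act_lin: "act \<kappa> (\<lambda>i j. c * X i j) = (\<lambda>i j. c * act \<kappa> X i j)"
  unfolding act_def fun_eq_iff
  by (simp add: sum_distrib_left mult.left_commute)



lemma pw:
  fixes \<xi> :: "real^4" and Xr Yr :: "4 \<Rightarrow> 4 \<Rightarrow> real"
  assumes "\<xi> \<noteq> 0" "antisym2 Xr" "antisym2 Yr" "Xr \<noteq> (\<lambda>i j. 0)"
     "cyclic \<xi> Xr" "cyclic \<xi> Yr" "Yr = act \<kappa> Xr"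
  shows "plane_wave \<kappa> (\<lambda>x i j. cos (\<xi> \<bullet> x) * Xr i j) (\<lambda>x i j. cos (\<xi> \<bullet> x) * Yr i j)"
proof -
  have 1: "((\<lambda>x. \<xi> \<bullet> x) has_derivative (\<lambda>v. \<xi> \<bullet> v)) (at x)" for x
    by (rule bounded_linear_imp_has_derivative) (rule bounded_linear_inner_right)
  have 2: "antisym2 (\<lambda>i j. complex_of_real (Xr i j))" using assms(2) unfolding antisym2_def by (metis of_real_minus)
  have 3: "antisym2 (\<lambda>i j. complex_of_real (Yr i j))" using assms(3) unfolding antisym2_def by (metis of_real_minus)
  have 4: "(\<lambda>i j. complex_of_real (Xr i j)) \<noteq> (\<lambda>i j. 0)"
    using assms(4) by (auto simp: fun_eq_iff)
  have 5: "cos (\<xi> \<bullet> x) * Z i j = Re (exp (\<i> * complex_of_real (\<xi> \<bullet> x)) * complex_of_real (Z i j))" for x i j Z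
    by (simp add: cis_conv_exp[symmetric])
  have 6: "closed2 (\<lambda>x i j. cos (\<xi> \<bullet> x) * Xr i j)" by (rule closed2_cos) fact
  have 7: "closed2 (\<lambda>x i j. cos (\<xi> \<bullet> x) * Yr i j)" by (rule closed2_cos) fact
  have 8: "(\<lambda>i j. cos (\<xi> \<bullet> x) * Yr i j) = act \<kappa> (\<lambda>i j. cos (\<xi> \<bullet> x) * Xr i j)" for x
    by (simp add: act_lin assms(7))
  show ?thesis unfolding plane_wave_def
    apply (rule exI[of _ "\<lambda>x. \<xi> \<bullet> x"], rule exI[of _ \<xi>], rule exI[of _ "\<lambda>i j. complex_of_real (Xr i j)"],
       rule exI[of _ "\<lambda>i j. complex_of_real (Yr i j)"])
    apply (intro conjI allI)
    apply (fact assms(1)) apply (fact 1) apply (fact 2) apply (fact 3) using 4 apply blast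
    apply (rule 5) apply (rule 5) apply (fact 6) apply (fact 7) apply (rule 8)
    done
qed


lemma delta2: fixes X :: "4 \<Rightarrow> 4 \<Rightarrow> real" shows "(\<Sum>a\<in>UNIV. \<Sum>b\<in>UNIV. (if a = p then 1 else 0) * (if b = q then 1 else 0) * (X a b::real))  = X p q"
proof -
  have "(\<Sum>b\<in>UNIV. (if a = p then 1 else 0) * (if b = q then 1 else 0) * (X a b::real))  = (if a = p then X a q else 0)" for a :: 4
  proof -
    have "(\<Sum>b\<in>UNIV. (if a = p then 1 else 0) * (if b = q then 1 else 0) * (X a b::real)) 
        = (\<Sum>b\<in>UNIV. if b = q then (if a = p then X a b else 0) else 0)"
      by (rule sum.cong) auto
    also have "\<dots> = (if a = p then X a q else 0)" by (subst sum.delta) auto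
    finally show ?thesis .
  qed
  then show ?thesis by simp
qed

lemma act_Id_raw: "act Id22 X i j = (X i j - X j i) / 2"
  unfolding act_def Id22_def
  by (simp add: left_diff_distrib sum_subtractf delta2 del: mult_if_delta)

lemma act_Id: "antisym2 X \<Longrightarrow> act Id22 X i j = X i j"
proof -
  assume a: "antisym2 X"
  show ?thesis using act_Id_raw[of X i j] a[unfolded antisym2_def, rule_format, of j i] by simp
qed

lemma act_sum: "act (\<lambda>i j r s. C1 * K1 i j r s + C2 * K2 i j r s) X i j = C1 * act K1 X i j + C2 * act K2 X i j"
  unfolding act_def by (simp add: distrib_right sum.distrib sum_distrib_left algebra_simps)

lemma act_anti:
  assumes k: "\<And>a b i j. \<kappa> a b i j = - \<kappa> a b j i"
  shows "antisym2 (act \<kappa> X)"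
  unfolding antisym2_def
proof (intro allI)
  fix i j
  have "(\<Sum>a\<in>UNIV. \<Sum>b\<in>UNIV. \<kappa> a b i j * X a b) = (\<Sum>a\<in>UNIV. \<Sum>b\<in>UNIV. - (\<kappa> a b j i * X a b))"
    by (intro sum.cong refl) (metis k mult_minus_left)
  then show "act \<kappa> X i j = - act \<kappa> X j i" unfolding act_def by (simp add: sum_negf)
qed

lemma hodge_anti: "hodge g a b i j = - hodge g a b j i"
  unfolding hodge_def by (simp add: lc_sw(6)[of _ _ j i] sum_negf)

lemma pair2_wedge:
  fixes \<xi> a :: "real^4"
  assumes an: "antisym2 A"
  shows "pair2 (\<lambda>i j. \<xi>$i * a$j - \<xi>$j * a$i) A = bl (amat A) \<xi> a"
proof -
  have sw: "(\<Sum>i\<in>UNIV. \<Sum>j\<in>UNIV. \<xi>$j * a$i * A i j) = (\<Sum>i\<in>UNIV. \<Sum>j\<in>UNIV. \<xi>$i * a$j * A j i)"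
    by (rule sum.swap)
  also have "\<dots> = (\<Sum>i\<in>UNIV. \<Sum>j\<in>UNIV. - (\<xi>$i * a$j * A i j))"
    by (intro sum.cong refl) (metis an antisym2_def mult_minus_right)
  finally have sw2: "(\<Sum>i\<in>UNIV. \<Sum>j\<in>UNIV. \<xi>$j * a$i * A i j) = - (\<Sum>i\<in>UNIV. \<Sum>j\<in>UNIV. \<xi>$i * a$j * A i j)"
    by (simp add: sum_negf)
  have "pair2 (\<lambda>i j. \<xi>$i * a$j - \<xi>$j * a$i) A
      = (1/2) * ((\<Sum>i\<in>UNIV. \<Sum>j\<in>UNIV. \<xi>$i * a$j * A i j) - (\<Sum>i\<in>UNIV. \<Sum>j\<in>UNIV. \<xi>$j * a$i * A i j))"
    unfolding pair2_def by (simp add: left_diff_distrib sum_subtractf)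
  also have "\<dots> = (\<Sum>i\<in>UNIV. \<Sum>j\<in>UNIV. \<xi>$i * a$j * A i j)" unfolding sw2 by simp
  also have "\<dots> = bl (amat A) \<xi> a"
    unfolding bl_def inner_vec_def matrix_vector_mult_def amat_def by (simp add: sum_distrib_left mult_ac)
  finally show ?thesis .
qed

theorem mainTheorem8:
  fixes g :: "real^4^4" and C1 C2 :: real
  assumes "indefinite_metric g" and "C1 \<noteq> 0"
  shows "\<not> decomposable (\<lambda>i j r s. C1 * hodge g i j r s + C2 * Id22 i j r s)"
proof
  define \<kappa> where "\<kappa> = (\<lambda>i j r s. C1 * hodge g i j r s + C2 * Id22 i j r s)"
  assume "decomposable (\<lambda>i j r s. C1 * hodge g i j r s + C2 * Id22 i j r s)"
  then obtain A B where an: "antisym2 A" "antisym2 B" and nz: "A \<noteq> (\<lambda>i j. 0)" "B \<noteq> (\<lambda>i j. 0)"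
    and dec: "\<And>F G. plane_wave \<kappa> F G \<Longrightarrow> (\<forall>x. pair2 (F x) A = 0) \<or> (\<forall>x. pair2 (F x) B = 0)"
    unfolding decomposable_def \<kappa>_def by blast
  have gsym: "transpose g = g" and dg: "det g \<noteq> 0" and gp: "\<exists>v. v \<bullet> (g *v v) > 0"
    and gn: "\<exists>w. w \<bullet> (g *v w) < 0"
    using assms(1) unfolding indefinite_metric_def by auto
  define h where "h = matrix_inv g"
  have "invertible g" using dg invertible_det_nz by blast
  then have "\<exists>A'. g ** A' = mat 1 \<and> A' ** g = mat 1" unfolding invertible_def by blast
  then have inv: "g ** h = mat 1 \<and> h ** g = mat 1" unfolding h_def matrix_inv_def by (rule someI_ex)
  have "transpose h ** g = mat 1"
    by (metis gsym inv matrix_transpose_mul transpose_mat)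
  then have sym: "transpose h = h"
    by (metis inv matrix_mul_assoc matrix_mul_lid matrix_mul_rid)
  have nd: "y = 0" if "h *v y = 0" for y
  proof -
    have "y = (g ** h) *v y" using inv by simp
    also have "\<dots> = g *v (h *v y)" by (simp add: matrix_vector_mul_assoc)
    finally show ?thesis using that by simp
  qed
  have hq: "bl h (g *v v) (g *v v) = v \<bullet> (g *v v)" for v
  proof -
    have "h *v (g *v v) = v" using inv by (simp add: matrix_vector_mul_assoc)
    then show ?thesis unfolding bl_def by (simp add: inner_commute)
  qed
  obtain p where "p \<bullet> (g *v p) > 0" using gp by blast
  then have pp: "bl h (g *v p) (g *v p) > 0" using hq by simp
  obtain n where "n \<bullet> (g *v n) < 0" using gn by blast
  then have nn: "bl h (g *v n) (g *v n) < 0" using hq by simp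
  obtain z0 where z0: "z0 \<noteq> 0" "bl h z0 z0 = 0" using exists_null[OF sym pp nn] by blast
  obtain v z w where vzw: "PH h z0 A v z w \<noteq> 0" "PH h z0 B v z w \<noteq> 0"
    using E_both[OF sym nd z0 an nz] by blast
  define \<xi> where "\<xi> = RR h z0 v"
  define a where "a = AA h z0 v z w"
  have q: "\<xi> \<bullet> (h *v \<xi>) = 0" using null_RR[OF sym z0(2)] unfolding \<xi>_def bl_def .
  have o: "a \<bullet> (h *v \<xi>) = 0" using orth_AA[of h z0 v z w] bl_sym[OF sym] unfolding \<xi>_def a_def bl_def by metis
  have pA: "bl (amat A) \<xi> a \<noteq> 0" using vzw(1) unfolding PH_def \<xi>_def a_def .
  have pB: "bl (amat B) \<xi> a \<noteq> 0" using vzw(2) unfolding PH_def \<xi>_def a_def .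
  have xi0: "\<xi> \<noteq> 0" using pA by (auto simp: bl_def)
  define Xr where "Xr = (\<lambda>i j. \<xi>$i * a$j - \<xi>$j * a$i)"
  define Yr where "Yr = act \<kappa> Xr"
  have XA: "pair2 Xr A \<noteq> 0" using pair2_wedge[OF an(1)] pA unfolding Xr_def by simp
  have XB: "pair2 Xr B \<noteq> 0" using pair2_wedge[OF an(2)] pB unfolding Xr_def by simp
  have aX: "antisym2 Xr" unfolding antisym2_def Xr_def by simp
  have nX: "Xr \<noteq> (\<lambda>i j. 0)" using XA unfolding pair2_def by auto
  have cX: "cyclic \<xi> Xr" unfolding cyclic_def Xr_def by (simp add: algebra_simps)
  have aY: "antisym2 Yr" unfolding Yr_def
  proof (rule act_anti)
    fix a b i j
    show "\<kappa> a b i j = - \<kappa> a b j i"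
      unfolding \<kappa>_def using hodge_anti[of g a b i j] by (simp add: Id22_def)
  qed
  define H where "H = act (hodge g) Xr"
  have Yeq: "Yr i j = C1 * H i j + C2 * Xr i j" for i j
    unfolding Yr_def \<kappa>_def H_def act_sum act_Id[OF aX] ..
  define M where "M = (\<lambda>c d. \<Sum>a'\<in>UNIV. \<Sum>b\<in>UNIV. h$a'$c * h$b$d * (\<xi>$a' * a$b - \<xi>$b * a$a'))"
  have Heq: "H r s = (sqrt \<bar>det g\<bar> / 2) * (\<Sum>c\<in>UNIV. \<Sum>d\<in>UNIV. M c d * levi_civita c d r s)" for r s
    unfolding H_def act_hodge M_def h_def Xr_def ..
  have cH: "cyclic \<xi> H"
    unfolding cyclic_def
  proof (intro allI)
    fix i j k
    have "\<xi>$i * H j k + \<xi>$j * H k i + \<xi>$k * H i j = (sqrt \<bar>det g\<bar> / 2) *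
       (\<xi>$i * (\<Sum>c\<in>UNIV. \<Sum>d\<in>UNIV. M c d * levi_civita c d j k)
       + \<xi>$j * (\<Sum>c\<in>UNIV. \<Sum>d\<in>UNIV. M c d * levi_civita c d k i)
       + \<xi>$k * (\<Sum>c\<in>UNIV. \<Sum>d\<in>UNIV. M c d * levi_civita c d i j))"
      unfolding Heq by (simp add: algebra_simps)
    also have "\<dots> = 0"
      using cyc_T[of M "\<lambda>c. \<xi>$c" i j k] contr[OF q o] unfolding M_def by simp
    finally show "\<xi>$i * H j k + \<xi>$j * H k i + \<xi>$k * H i j = 0" .
  qed
  have cY: "cyclic \<xi> Yr"
    unfolding cyclic_def
  proof (intro allI)
    fix i j k
    have "\<xi>$i * Yr j k + \<xi>$j * Yr k i + \<xi>$k * Yr i j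
       = C1 * (\<xi>$i * H j k + \<xi>$j * H k i + \<xi>$k * H i j) + C2 * (\<xi>$i * Xr j k + \<xi>$j * Xr k i + \<xi>$k * Xr i j)"
      unfolding Yeq by (simp add: algebra_simps)
    also have "\<dots> = 0" using cH cX unfolding cyclic_def by simp
    finally show "\<xi>$i * Yr j k + \<xi>$j * Yr k i + \<xi>$k * Yr i j = 0" .
  qed
  have PW: "plane_wave \<kappa> (\<lambda>x i j. cos (\<xi> \<bullet> x) * Xr i j) (\<lambda>x i j. cos (\<xi> \<bullet> x) * Yr i j)"
    by (rule pw[OF xi0 aX aY nX cX cY Yr_def])
  have e: "(\<lambda>i j. cos (\<xi> \<bullet> 0) * Xr i j) = Xr" by simp
  from dec[OF PW] have "pair2 (\<lambda>i j. cos (\<xi> \<bullet> 0) * Xr i j) A = 0 \<or> pair2 (\<lambda>i j. cos (\<xi> \<bullet> 0) * Xr i j) B = 0"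
    by blast
  then have "pair2 Xr A = 0 \<or> pair2 Xr B = 0" unfolding e .
  then show False using XA XB by blast
qed


end
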